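(* Let $G\in\Gamma$ be twin-free. (1) If some vertex of $G$ has degree at least $3$, then $G$ has an induced subgraph isomorphic to one of the three bipartite graphs with biadjacency matrices \[\begin{bmatrix}1&0&0\\1&1&1\\0&0&1\end{bmatrix},\qquad \begin{bmatrix}1&1&0\\1&1&1\\0&1&0\end{bmatrix},\qquad \begin{bmatrix}1&1&0\\1&1&1\\0&1&1\end{bmatrix}.\] (2) If $1<\|G\|<\eta_4$, where $\eta_4=\frac1{15}\sqrt{169+38\sqrt{19}}$, then every vertex of $G$ has degree at most $2$ and some vertex has degree exactly $2$ (i.e. $\deg(G)=2$).
   Context: $\Gamma$ is the collection of all bipartite graphs $G\subseteq R\times C$ with $|R|,|C|\in\{1,2,\dots\}\cup\{\aleph_0\}$; enumerating $R=\{r_i\}$, $C=\{c_j\}$, the biadjacency matrix $M(G)$ has $(i,j)$ entry $1$ if $(r_i,c_j)$ is an edge and $0$ otherwise. $\|G\|$ denotes the Schur norm $\|M(G)\|_\bullet=\sup\{\|M(G)\bullet X\|:\|X\|\le1\}$ (entrywise product, operator norm on $\ell^2$ spaces over $\mathbb F\in\{\mathbb R,\mathbb C\}$; possibly $\infty$). An induced subgraph of $G$ is $G\cap(R_0\times C_0)$ for $R_0\subseteq R$, $C_0\subseteq C$; graphs are considered up to isomorphism, where isomorphisms may swap the two sides of the bipartition. Two vertices are twins if they have the same neighbour sets; $G$ is twin-free if no two distinct vertices are twins. $\deg(G)$ is the maximum vertex degree. *)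

theory Defs
  imports "HOL-Analysis.Analysis" "HOL-Library.Extended_Nat"
begin

definition bip_graph :: "'a set \<Rightarrow> 'b set \<Rightarrow> ('a \<times> 'b) set \<Rightarrow> bool" where
  "bip_graph R C E \<longleftrightarrow> R \<noteq> {} \<and> C \<noteq> {} \<and> countable R \<and> countable C \<and> E \<subseteq> R \<times> C"

definition row_nbhd :: "('a \<times> 'b) set \<Rightarrow> 'a \<Rightarrow> 'b set" where
  "row_nbhd E r = {c. (r, c) \<in> E}"

definition col_nbhd :: "('a \<times> 'b) set \<Rightarrow> 'b \<Rightarrow> 'a set" where
  "col_nbhd E c = {r. (r, c) \<in> E}"

definition twin_free :: "'a set \<Rightarrow> 'b set \<Rightarrow> ('a \<times> 'b) set \<Rightarrow> bool" where
  "twin_free R C E \<longleftrightarrow>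
     (\<forall>r1\<in>R. \<forall>r2\<in>R. r1 \<noteq> r2 \<longrightarrow> row_nbhd E r1 \<noteq> row_nbhd E r2) \<and>
     (\<forall>c1\<in>C. \<forall>c2\<in>C. c1 \<noteq> c2 \<longrightarrow> col_nbhd E c1 \<noteq> col_nbhd E c2)"

definition ecard :: "'x set \<Rightarrow> enat" where
  "ecard S = (if finite S then enat (card S) else \<infinity>)"

definition degrees :: "'a set \<Rightarrow> 'b set \<Rightarrow> ('a \<times> 'b) set \<Rightarrow> enat set" where
  "degrees R C E = (\<lambda>r. ecard (row_nbhd E r)) ` R \<union> (\<lambda>c. ecard (col_nbhd E c)) ` C"

definition max_deg :: "'a set \<Rightarrow> 'b set \<Rightarrow> ('a \<times> 'b) set \<Rightarrow> enat" where
  "max_deg R C E = Sup (degrees R C E)"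

text \<open>Operator norm (on \<ell>^2 spaces) of a matrix A indexed by R \<times> C, as an extended real:
  supremum of the \<ell>^2-norm of (A x) restricted to finite row sets, over unit vectors x
  finitely supported in C. (Value \<infinity> when A is unbounded.)\<close>
definition mat_opnorm :: "'a set \<Rightarrow> 'b set \<Rightarrow> ('a \<Rightarrow> 'b \<Rightarrow> 'f::real_normed_field) \<Rightarrow> ereal" where
  "mat_opnorm R C A =
     (SUP p \<in> {(R0, C0, x). finite R0 \<and> R0 \<subseteq> R \<and> finite C0 \<and> C0 \<subseteq> C \<and>
                             (\<Sum>j\<in>C0. (norm (x j))\<^sup>2) \<le> (1::real)}.
        case p of (R0, C0, x) \<Rightarrow>
          ereal (sqrt (\<Sum>i\<in>R0. (norm (\<Sum>j\<in>C0. A i j * x j))\<^sup>2)))"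

definition schur_norm :: "'f::real_normed_field itself \<Rightarrow> 'a set \<Rightarrow> 'b set \<Rightarrow> ('a \<times> 'b) set \<Rightarrow> ereal" where
  "schur_norm _ R C E =
     (SUP X \<in> {X :: 'a \<Rightarrow> 'b \<Rightarrow> 'f. mat_opnorm R C X \<le> 1}.
        mat_opnorm R C (\<lambda>i j. if (i, j) \<in> E then X i j else 0))"

definition has_induced_copy :: "'a set \<Rightarrow> 'b set \<Rightarrow> ('a \<times> 'b) set \<Rightarrow> (nat \<Rightarrow> nat \<Rightarrow> bool) \<Rightarrow> bool" where
  "has_induced_copy R C E P \<longleftrightarrow>
     (\<exists>R0 C0. R0 \<subseteq> R \<and> C0 \<subseteq> C \<and>
       ((\<exists>f g. bij_betw f R0 {..<3} \<and> bij_betw g C0 {..<3} \<and>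
              (\<forall>r\<in>R0. \<forall>c\<in>C0. (r, c) \<in> E \<longleftrightarrow> P (f r) (g c))) \<or>
        (\<exists>f g. bij_betw f R0 {..<3} \<and> bij_betw g C0 {..<3} \<and>
              (\<forall>r\<in>R0. \<forall>c\<in>C0. (r, c) \<in> E \<longleftrightarrow> P (g c) (f r)))))"

definition H1 :: "nat \<Rightarrow> nat \<Rightarrow> bool" where
  "H1 i j = [[True, False, False], [True, True, True], [False, False, True]] ! i ! j"
definition H2 :: "nat \<Rightarrow> nat \<Rightarrow> bool" where
  "H2 i j = [[True, True, False], [True, True, True], [False, True, False]] ! i ! j"
definition H3 :: "nat \<Rightarrow> nat \<Rightarrow> bool" where
  "H3 i j = [[True, True, False], [True, True, True], [False, True, True]] ! i ! j"

definition eta4 :: real where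
  "eta4 = sqrt (169 + 38 * sqrt 19) / 15"

end

theory Submission
  imports Defs
begin


lemma lt3: "{..<3::nat} = {0,1,2}" by auto

lemma mk_copy:
  assumes "r0 \<in> R" "r1 \<in> R" "r2 \<in> R" "r0 \<noteq> r1" "r0 \<noteq> r2" "r1 \<noteq> r2"
    "c0 \<in> C" "c1 \<in> C" "c2 \<in> C" "c0 \<noteq> c1" "c0 \<noteq> c2" "c1 \<noteq> c2"
    "(r0,c0) \<in> E \<longleftrightarrow> P 0 0" "(r0,c1) \<in> E \<longleftrightarrow> P 0 1" "(r0,c2) \<in> E \<longleftrightarrow> P 0 2"
    "(r1,c0) \<in> E \<longleftrightarrow> P 1 0" "(r1,c1) \<in> E \<longleftrightarrow> P 1 1" "(r1,c2) \<in> E \<longleftrightarrow> P 1 2"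
    "(r2,c0) \<in> E \<longleftrightarrow> P 2 0" "(r2,c1) \<in> E \<longleftrightarrow> P 2 1" "(r2,c2) \<in> E \<longleftrightarrow> P 2 2"
  shows "has_induced_copy R C E P"
proof -
  define f where "f x = (if x = r0 then 0 else if x = r1 then 1 else (2::nat))" for x
  define g where "g x = (if x = c0 then 0 else if x = c1 then 1 else (2::nat))" for x
  have bf: "bij_betw f {r0,r1,r2} {..<3}"
    unfolding bij_betw_def inj_on_def lt3 using assms(4-6) by (auto simp: f_def)
  have bg: "bij_betw g {c0,c1,c2} {..<3}"
    unfolding bij_betw_def inj_on_def lt3 using assms(10-12) by (auto simp: g_def)
  have "\<forall>r\<in>{r0,r1,r2}. \<forall>c\<in>{c0,c1,c2}. (r, c) \<in> E \<longleftrightarrow> P (f r) (g c)"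
    using assms by (auto simp: f_def g_def)
  then show ?thesis unfolding has_induced_copy_def using bf bg assms(1-3,7-9)
    by (intro exI[of _ "{r0,r1,r2}"] exI[of _ "{c0,c1,c2}"]) blast
qed

lemma H1v: "H1 0 0" "\<not> H1 0 1" "\<not> H1 0 2" "H1 1 0" "H1 1 1" "H1 1 2" "\<not> H1 2 0" "\<not> H1 2 1" "H1 2 2"
  by (simp_all add: H1_def)
lemma H2v: "H2 0 0" "H2 0 1" "\<not> H2 0 2" "H2 1 0" "H2 1 1" "H2 1 2" "\<not> H2 2 0" "H2 2 1" "\<not> H2 2 2"
  by (simp_all add: H2_def)
lemma H3v: "H3 0 0" "H3 0 1" "\<not> H3 0 2" "H3 1 0" "H3 1 1" "H3 1 2" "\<not> H3 2 0" "H3 2 1" "H3 2 2"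
  by (simp_all add: H3_def)

definition goal1 where "goal1 R C E \<longleftrightarrow> has_induced_copy R C E H1 \<or> has_induced_copy R C E H2 \<or> has_induced_copy R C E H3"

lemma LH1:
  assumes "E \<subseteq> R \<times> C" "x \<noteq> y" "y \<noteq> z" "x \<noteq> z" "(r,x) \<in> E" "(r,y) \<in> E" "(r,z) \<in> E"
    "(A,x) \<in> E" "(A,y) \<notin> E" "(A,z) \<notin> E" "(B,x) \<notin> E" "(B,y) \<notin> E" "(B,z) \<in> E"
  shows "goal1 R C E"
  unfolding goal1_def
  apply (rule disjI1, rule mk_copy[of A R r B x C y z])
  using assms H1v by auto

lemma LH2:
  assumes "E \<subseteq> R \<times> C" "x \<noteq> y" "y \<noteq> z" "x \<noteq> z" "(r,x) \<in> E" "(r,y) \<in> E" "(r,z) \<in> E"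
    "(A,x) \<in> E" "(A,y) \<in> E" "(A,z) \<notin> E" "(B,x) \<notin> E" "(B,y) \<in> E" "(B,z) \<notin> E"
  shows "goal1 R C E"
  unfolding goal1_def
  apply (rule disjI2, rule disjI1, rule mk_copy[of A R r B x C y z])
  using assms H2v by auto

lemma LH3:
  assumes "E \<subseteq> R \<times> C" "x \<noteq> y" "y \<noteq> z" "x \<noteq> z" "(r,x) \<in> E" "(r,y) \<in> E" "(r,z) \<in> E"
    "(A,x) \<in> E" "(A,y) \<in> E" "(A,z) \<notin> E" "(B,x) \<notin> E" "(B,y) \<in> E" "(B,z) \<in> E"
  shows "goal1 R C E"
  unfolding goal1_def
  apply (rule disjI2, rule disjI2, rule mk_copy[of A R r B x C y z])
  using assms H3v by auto

lemma sep:
  assumes "\<forall>c1\<in>C. \<forall>c2\<in>C. c1 \<noteq> c2 \<longrightarrow> col_nbhd E c1 \<noteq> col_nbhd E c2" "y \<in> C" "z \<in> C" "y \<noteq> z"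
  obtains B where "(B,y) \<in> E" "(B,z) \<notin> E" | B where "(B,y) \<notin> E" "(B,z) \<in> E"
  using assms unfolding col_nbhd_def by blast

lemma case1:
  assumes "E \<subseteq> R \<times> C" "\<forall>c1\<in>C. \<forall>c2\<in>C. c1 \<noteq> c2 \<longrightarrow> col_nbhd E c1 \<noteq> col_nbhd E c2"
   "x \<noteq> y" "y \<noteq> z" "x \<noteq> z" "(r,x) \<in> E" "(r,y) \<in> E" "(r,z) \<in> E"
    "(A,x) \<in> E" "(A,y) \<notin> E" "(A,z) \<notin> E"
  shows "goal1 R C E"
proof -
  have yz: "y \<in> C" "z \<in> C" using assms by auto
  show ?thesis
  proof (rule sep[OF assms(2) yz assms(4)])
    fix B assume B: "(B,y) \<in> E" "(B,z) \<notin> E"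
    show ?thesis
    proof (cases "(B,x) \<in> E")
      case True
      then show ?thesis using LH2[of E R C y x z r B A] assms B by auto
    next
      case False
      then show ?thesis using LH1[of E R C x z y r A B] assms B by auto
    qed
  next
    fix B assume B: "(B,y) \<notin> E" "(B,z) \<in> E"
    show ?thesis
    proof (cases "(B,x) \<in> E")
      case True
      then show ?thesis using LH2[of E R C z x y r B A] assms B by auto
    next
      case False
      then show ?thesis using LH1[of E R C x y z r A B] assms B by auto
    qed
  qed
qed

lemma case2:
  assumes "E \<subseteq> R \<times> C" "\<forall>c1\<in>C. \<forall>c2\<in>C. c1 \<noteq> c2 \<longrightarrow> col_nbhd E c1 \<noteq> col_nbhd E c2"
   "x \<noteq> y" "y \<noteq> z" "x \<noteq> z" "(r,x) \<in> E" "(r,y) \<in> E" "(r,z) \<in> E"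
    "(A,x) \<in> E" "(A,y) \<notin> E" "(A,z) \<in> E"
    and ns: "\<And>B. \<not> ((B,x) \<in> E \<and> (B,y) \<notin> E \<and> (B,z) \<notin> E)"
      "\<And>B. \<not> ((B,x) \<notin> E \<and> (B,y) \<in> E \<and> (B,z) \<notin> E)"
      "\<And>B. \<not> ((B,x) \<notin> E \<and> (B,y) \<notin> E \<and> (B,z) \<in> E)"
  shows "goal1 R C E"
proof -
  have xz: "x \<in> C" "z \<in> C" using assms by auto
  show ?thesis
  proof (rule sep[OF assms(2) xz assms(5)])
    fix B assume B: "(B,x) \<in> E" "(B,z) \<notin> E"
    then have "(B,y) \<in> E" using ns by blast
    then show ?thesis using LH3[of E R C z x y r A B] assms B by auto
  next
    fix B assume B: "(B,x) \<notin> E" "(B,z) \<in> E"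
    then have "(B,y) \<in> E" using ns by blast
    then show ?thesis using LH3[of E R C x z y r A B] assms B by auto
  qed
qed

lemma row_case:
  assumes "E \<subseteq> R \<times> C" "\<forall>c1\<in>C. \<forall>c2\<in>C. c1 \<noteq> c2 \<longrightarrow> col_nbhd E c1 \<noteq> col_nbhd E c2"
   "x \<noteq> y" "y \<noteq> z" "x \<noteq> z" "(r,x) \<in> E" "(r,y) \<in> E" "(r,z) \<in> E"
  shows "goal1 R C E"
proof (cases "\<exists>B. ((B,x) \<in> E \<and> (B,y) \<notin> E \<and> (B,z) \<notin> E)")
  case True then show ?thesis using case1[of E R C x y z r] assms by blast
next
  case F1: False
  show ?thesis
  proof (cases "\<exists>B. ((B,x) \<notin> E \<and> (B,y) \<in> E \<and> (B,z) \<notin> E)")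
    case True then show ?thesis using case1[of E R C y x z r] assms by blast
  next
    case F2: False
    show ?thesis
    proof (cases "\<exists>B. ((B,x) \<notin> E \<and> (B,y) \<notin> E \<and> (B,z) \<in> E)")
      case True then show ?thesis using case1[of E R C z y x r] assms by blast
    next
      case F3: False
      have xy: "x \<in> C" "y \<in> C" using assms by auto
      show ?thesis
      proof (rule sep[OF assms(2) xy assms(3)])
        fix A assume A: "(A,x) \<in> E" "(A,y) \<notin> E"
        then have "(A,z) \<in> E" using F1 by blast
        then show ?thesis using case2[of E R C x y z r A] assms A F1 F2 F3 by blast
      next
        fix A assume A: "(A,x) \<notin> E" "(A,y) \<in> E"
        then have "(A,z) \<in> E" using F2 by blast
        then show ?thesis using case2[of E R C y x z r A] assms A F1 F2 F3 by blast
      qed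
    qed
  qed
qed


lemma orth_norm:
  fixes w :: "nat \<Rightarrow> 'f::{real_normed_field,real_inner}" and N :: "nat\<Rightarrow>nat\<Rightarrow>real"
  assumes orth: "\<And>k k'. k<n \<Longrightarrow> k'<n \<Longrightarrow> (\<Sum>l<n. N l k * N l k') = (if k=k' then 1 else 0)"
  shows "(\<Sum>l<n. (norm (\<Sum>k<n. of_real (N l k) * w k))\<^sup>2) = (\<Sum>k<n. (norm (w k))\<^sup>2)"
proof -
  have 1: "(norm (\<Sum>k<n. of_real (N l k) * w k))\<^sup>2 = (\<Sum>k<n. \<Sum>k'<n. (N l k * N l k') * inner (w k') (w k))" for l
    by (simp add: power2_norm_eq_inner inner_sum_left inner_sum_right scaleR_conv_of_real[symmetric] sum_distrib_left mult.assoc)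
  have "(\<Sum>l<n. (norm (\<Sum>k<n. of_real (N l k) * w k))\<^sup>2) = (\<Sum>k<n. \<Sum>k'<n. \<Sum>l<n. (N l k * N l k') * inner (w k') (w k))"
  proof -
    have sw: "(\<Sum>l<n. \<Sum>k<n. \<Sum>k'<n. F l k k') = (\<Sum>k<n. \<Sum>k'<n. \<Sum>l<n. F l k k')" for F :: "nat \<Rightarrow> nat \<Rightarrow> nat \<Rightarrow> real"
    proof -
      have "(\<Sum>l<n. \<Sum>k<n. \<Sum>k'<n. F l k k') = (\<Sum>k<n. \<Sum>l<n. \<Sum>k'<n. F l k k')" by (rule sum.swap)
      also have "\<dots> = (\<Sum>k<n. \<Sum>k'<n. \<Sum>l<n. F l k k')" by (rule sum.cong[OF refl], rule sum.swap)
      finally show ?thesis .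
    qed
    show ?thesis unfolding 1 by (rule sw)
  qed
  also have "\<dots> = (\<Sum>k<n. \<Sum>k'<n. (if k = k' then 1 else 0) * inner (w k') (w k))"
    by (intro sum.cong refl) (simp add: sum_distrib_right[symmetric] orth)
  also have "\<dots> = (\<Sum>k<n. \<Sum>k'<n. (if k' = k then inner (w k') (w k) else 0))"
    by (intro sum.cong refl) auto
  also have "\<dots> = (\<Sum>k<n. inner (w k) (w k))"
    by (simp add: sum.delta)
  finally show ?thesis by (simp add: power2_norm_eq_inner)
qed

lemma copy_lb:
  fixes R :: "'a set" and C :: "'b set" and E :: "('a\<times>'b) set" and N :: "nat\<Rightarrow>nat\<Rightarrow>real"
    and v :: "nat \<Rightarrow> real" and P :: "nat\<Rightarrow>nat\<Rightarrow>bool" and \<eta> :: real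
  assumes R0: "R0 \<subseteq> R" "C0 \<subseteq> C" and bf: "bij_betw f R0 {..<3}" and bg: "bij_betw g C0 {..<3}"
   and adj: "\<forall>r\<in>R0. \<forall>c\<in>C0. (r,c)\<in>E \<longleftrightarrow> P (f r) (g c)"
   and orth: "\<And>k k'. k<3 \<Longrightarrow> k'<3 \<Longrightarrow> (\<Sum>l<3. N l k * N l k') = (if k=k' then 1 else 0)"
   and pos: "0 < (\<Sum>k<3. (v k)\<^sup>2)"
   and val: "\<eta>\<^sup>2 * (\<Sum>k<3. (v k)\<^sup>2) \<le> (\<Sum>l<3. (\<Sum>k<3. (if P l k then N l k else 0) * v k)\<^sup>2)"
   and eta: "0 \<le> \<eta>"
  shows "ereal \<eta> \<le> schur_norm TYPE('f::{real_normed_field,real_inner}) R C E"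
proof -
  define X :: "'a \<Rightarrow> 'b \<Rightarrow> 'f" where "X i j = (if i\<in>R0 \<and> j\<in>C0 then of_real (N (f i) (g j)) else 0)" for i j
  have finR0: "finite R0" using bf bij_betw_finite by blast
  have finC0: "finite C0" using bg bij_betw_finite by blast
  have gi: "\<And>j. j\<in>C0 \<Longrightarrow> inv_into C0 g (g j) = j" using bg bij_betw_inv_into_left by metis
  have opX: "mat_opnorm R C X \<le> 1"
    unfolding mat_opnorm_def
  proof (rule SUP_least, clarify)
    fix R1 C1 and y :: "'b \<Rightarrow> 'f"
    assume fR1: "finite R1" and "R1 \<subseteq> R" and fC1: "finite C1" and "C1 \<subseteq> C" and y1: "(\<Sum>j\<in>C1. (norm (y j))\<^sup>2) \<le> 1"
    define w where "w k = (if inv_into C0 g k \<in> C1 then y (inv_into C0 g k) else 0)" for k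
    have wg: "j \<in> C0 \<Longrightarrow> w (g j) = (if j \<in> C1 then y j else 0)" for j by (simp add: w_def gi)
    have inner: "(\<Sum>j\<in>C1. X i j * y j) = (\<Sum>k<3. of_real (N (f i) k) * w k)" if i: "i \<in> R0" for i
    proof -
      have "(\<Sum>j\<in>C1. X i j * y j) = (\<Sum>j\<in>C1\<inter>C0. X i j * y j)"
        by (rule sum.mono_neutral_right[OF fC1]) (auto simp: X_def)
      also have "\<dots> = (\<Sum>j\<in>C0. if j \<in> C1 then X i j * y j else 0)"
        using sum.inter_restrict[OF finC0, of "\<lambda>j. X i j * y j" C1] by (simp add: Int_commute)
      also have "\<dots> = (\<Sum>j\<in>C0. of_real (N (f i) (g j)) * w (g j))"
        by (intro sum.cong refl) (simp add: wg X_def i)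
      also have "\<dots> = (\<Sum>k<3. of_real (N (f i) k) * w k)"
        by (rule sum.reindex_bij_betw[OF bg])
      finally show ?thesis .
    qed
    have "(\<Sum>i\<in>R1. (norm (\<Sum>j\<in>C1. X i j * y j))\<^sup>2) = (\<Sum>i\<in>R1\<inter>R0. (norm (\<Sum>j\<in>C1. X i j * y j))\<^sup>2)"
      by (rule sum.mono_neutral_right[OF fR1]) (auto simp: X_def)
    also have "\<dots> \<le> (\<Sum>i\<in>R0. (norm (\<Sum>j\<in>C1. X i j * y j))\<^sup>2)"
      by (rule sum_mono2[OF finR0]) auto
    also have "\<dots> = (\<Sum>i\<in>R0. (norm (\<Sum>k<3. of_real (N (f i) k) * w k))\<^sup>2)"
      by (intro sum.cong refl) (simp add: inner)
    also have "\<dots> = (\<Sum>l<3. (norm (\<Sum>k<3. of_real (N l k) * w k))\<^sup>2)"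
      by (rule sum.reindex_bij_betw[OF bf])
    also have "\<dots> = (\<Sum>k<3. (norm (w k))\<^sup>2)"
      by (rule orth_norm[OF orth])
    also have "\<dots> = (\<Sum>j\<in>C0. (norm (w (g j)))\<^sup>2)"
      by (rule sum.reindex_bij_betw[OF bg, symmetric])
    also have "\<dots> = (\<Sum>j\<in>C0. if j \<in> C1 then (norm (y j))\<^sup>2 else 0)"
      by (intro sum.cong refl) (simp add: wg)
    also have "\<dots> = (\<Sum>j\<in>C0 \<inter> C1. (norm (y j))\<^sup>2)"
      using sum.inter_restrict[OF finC0, of "\<lambda>j. (norm (y j))\<^sup>2" C1] by simp
    also have "\<dots> \<le> (\<Sum>j\<in>C1. (norm (y j))\<^sup>2)"
      by (rule sum_mono2[OF fC1]) auto
    also have "\<dots> \<le> 1" by (rule y1)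
    finally have "(\<Sum>i\<in>R1. (norm (\<Sum>j\<in>C1. X i j * y j))\<^sup>2) \<le> 1" .
    then show "ereal (sqrt (\<Sum>i\<in>R1. (norm (\<Sum>j\<in>C1. X i j * y j))\<^sup>2)) \<le> 1"
      by simp
  qed
  define S where "S = (\<Sum>k<3. (v k)\<^sup>2)"
  have Spos: "S > 0" using pos by (simp add: S_def)
  define y :: "'b \<Rightarrow> 'f" where "y j = of_real (v (g j) / sqrt S)" for j
  define Z where "Z i j = (if (i,j)\<in>E then X i j else 0)" for i j
  have y1: "(\<Sum>j\<in>C0. (norm (y j))\<^sup>2) \<le> 1"
  proof -
    have "(\<Sum>j\<in>C0. (norm (y j))\<^sup>2) = (\<Sum>j\<in>C0. (v (g j))\<^sup>2 / S)"
      using Spos by (intro sum.cong refl) (simp only: y_def norm_of_real power2_abs, simp add: power_divide)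
    also have "\<dots> = (\<Sum>k<3. (v k)\<^sup>2 / S)"
      by (rule sum.reindex_bij_betw[OF bg])
    also have "\<dots> = 1" using Spos by (simp add: S_def sum_divide_distrib[symmetric])
    finally show ?thesis by simp
  qed
  let ?M = "\<lambda>l k. (if P l k then N l k else 0)"
  have rowval: "(\<Sum>j\<in>C0. Z i j * y j) = of_real ((\<Sum>k<3. ?M (f i) k * v k) / sqrt S)" if i: "i\<in>R0" for i
  proof -
    have "(\<Sum>j\<in>C0. Z i j * y j) = (\<Sum>j\<in>C0. of_real (?M (f i) (g j) * v (g j) / sqrt S))"
      using adj i by (intro sum.cong refl) (simp add: Z_def X_def y_def)
    also have "\<dots> = (\<Sum>k<3. of_real (?M (f i) k * v k / sqrt S))"
      by (rule sum.reindex_bij_betw[OF bg])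
    also have "\<dots> = of_real ((\<Sum>k<3. ?M (f i) k * v k) / sqrt S)"
      by (simp add: sum_divide_distrib)
    finally show ?thesis .
  qed
  have "(\<Sum>i\<in>R0. (norm (\<Sum>j\<in>C0. Z i j * y j))\<^sup>2) = (\<Sum>i\<in>R0. (\<Sum>k<3. ?M (f i) k * v k)\<^sup>2 / S)"
    using Spos by (intro sum.cong refl) (simp only: rowval norm_of_real power2_abs, simp add: power_divide)
  also have "\<dots> = (\<Sum>l<3. (\<Sum>k<3. ?M l k * v k)\<^sup>2 / S)"
    by (rule sum.reindex_bij_betw[OF bf])
  also have "\<dots> = (\<Sum>l<3. (\<Sum>k<3. ?M l k * v k)\<^sup>2) / S"
    by (simp add: sum_divide_distrib)
  finally have eqv: "(\<Sum>i\<in>R0. (norm (\<Sum>j\<in>C0. Z i j * y j))\<^sup>2) = (\<Sum>l<3. (\<Sum>k<3. ?M l k * v k)\<^sup>2) / S" .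
  have "\<eta>\<^sup>2 \<le> (\<Sum>l<3. (\<Sum>k<3. ?M l k * v k)\<^sup>2) / S"
    using val Spos by (simp add: S_def pos_le_divide_eq)
  then have "\<eta> \<le> sqrt ((\<Sum>i\<in>R0. (norm (\<Sum>j\<in>C0. Z i j * y j))\<^sup>2))"
    unfolding eqv using eta real_le_rsqrt by blast
  then have "ereal \<eta> \<le> ereal (sqrt ((\<Sum>i\<in>R0. (norm (\<Sum>j\<in>C0. Z i j * y j))\<^sup>2)))" by simp
  also have "\<dots> \<le> mat_opnorm R C Z"
    unfolding mat_opnorm_def
    by (rule SUP_upper2[of "(R0, C0, y)"]) (use finR0 finC0 R0 y1 in auto)
  also have "\<dots> \<le> schur_norm TYPE('f) R C E"
    unfolding schur_norm_def Z_def
    by (rule SUP_upper2[of X]) (use opX in auto)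
  finally show ?thesis .
qed


lemma sum3: "(\<Sum>k::nat<3. h k) = h 0 + h 1 + (h 2 :: 'x::comm_monoid_add)"
  by (simp add: numeral_3_eq_3 numeral_2_eq_2 lessThan_Suc add.commute add.left_commute)

lemma lt3E: "(k::nat) < 3 \<Longrightarrow> k = 0 \<or> k = 1 \<or> k = 2" by auto

definition mat3 :: "'x \<Rightarrow> 'x \<Rightarrow> 'x \<Rightarrow> 'x \<Rightarrow> 'x \<Rightarrow> 'x \<Rightarrow> 'x \<Rightarrow> 'x \<Rightarrow> 'x \<Rightarrow> nat \<Rightarrow> nat \<Rightarrow> 'x" where
  "mat3 x00 x01 x02 x10 x11 x12 x20 x21 x22 l k = [[x00,x01,x02],[x10,x11,x12],[x20,x21,x22]] ! l ! k"

lemma mat3_simps[simp]: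
  "mat3 x00 x01 x02 x10 x11 x12 x20 x21 x22 0 0 = x00"
  "mat3 x00 x01 x02 x10 x11 x12 x20 x21 x22 0 1 = x01"
"mat3 x00 x01 x02 x10 x11 x12 x20 x21 x22 0 (Suc 0) = x01"
  "mat3 x00 x01 x02 x10 x11 x12 x20 x21 x22 0 2 = x02"
  "mat3 x00 x01 x02 x10 x11 x12 x20 x21 x22 1 0 = x10"
"mat3 x00 x01 x02 x10 x11 x12 x20 x21 x22 (Suc 0) 0 = x10"
  "mat3 x00 x01 x02 x10 x11 x12 x20 x21 x22 1 1 = x11"
"mat3 x00 x01 x02 x10 x11 x12 x20 x21 x22 (Suc 0) 1 = x11"
"mat3 x00 x01 x02 x10 x11 x12 x20 x21 x22 1 (Suc 0) = x11"
"mat3 x00 x01 x02 x10 x11 x12 x20 x21 x22 (Suc 0) (Suc 0) = x11"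
  "mat3 x00 x01 x02 x10 x11 x12 x20 x21 x22 1 2 = x12"
"mat3 x00 x01 x02 x10 x11 x12 x20 x21 x22 (Suc 0) 2 = x12"
  "mat3 x00 x01 x02 x10 x11 x12 x20 x21 x22 2 0 = x20"
  "mat3 x00 x01 x02 x10 x11 x12 x20 x21 x22 2 1 = x21"
"mat3 x00 x01 x02 x10 x11 x12 x20 x21 x22 2 (Suc 0) = x21"
  "mat3 x00 x01 x02 x10 x11 x12 x20 x21 x22 2 2 = x22"
  by (simp_all add: mat3_def)

lemma orth9:
  fixes x00 x01 x02 x10 x11 x12 x20 x21 x22 :: real
  assumes "x00*x00 + x10*x10 + x20*x20 = 1" "x01*x01 + x11*x11 + x21*x21 = 1" "x02*x02 + x12*x12 + x22*x22 = 1"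
    "x00*x01 + x10*x11 + x20*x21 = 0" "x00*x02 + x10*x12 + x20*x22 = 0" "x01*x02 + x11*x12 + x21*x22 = 0"
    and "k < 3" "k' < 3"
  shows "(\<Sum>l<3. mat3 x00 x01 x02 x10 x11 x12 x20 x21 x22 l k * mat3 x00 x01 x02 x10 x11 x12 x20 x21 x22 l k') = (if k = k' then 1 else 0)"
  using lt3E[OF assms(7)] lt3E[OF assms(8)] assms(1-6)
  by (auto simp: sum3 algebra_simps)

lemma H2_wit:
  "\<And>k k'. k<3 \<Longrightarrow> k'<3 \<Longrightarrow> (\<Sum>l<3. mat3 (21/29) (12/29) (16/29) (12/29) (11/29) (-24/29) (-16/29) (24/29) (3/29) l k * mat3 (21/29) (12/29) (16/29) (12/29) (11/29) (-24/29) (-16/29) (24/29) (3/29) l k') = (if k=k' then (1::real) else 0)"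
  by (rule orth9) (simp_all)

definition vec3 :: "'x \<Rightarrow> 'x \<Rightarrow> 'x \<Rightarrow> nat \<Rightarrow> 'x" where "vec3 a b c k = [a,b,c] ! k"
lemma vec3_simps[simp]: "vec3 a b c 0 = a" "vec3 a b c 1 = b" "vec3 a b c (Suc 0) = b" "vec3 a b c 2 = c"
  by (simp_all add: vec3_def)

lemma hic_lb:
  fixes N Nt :: "nat\<Rightarrow>nat\<Rightarrow>real" and v u :: "nat \<Rightarrow> real" and \<eta> :: real
  assumes hic: "has_induced_copy R C E P"
   and o1: "\<And>k k'. k<3 \<Longrightarrow> k'<3 \<Longrightarrow> (\<Sum>l<3. N l k * N l k') = (if k=k' then 1 else 0)"
   and p1: "0 < (\<Sum>k<3. (v k)\<^sup>2)"
   and v1: "\<eta>\<^sup>2 * (\<Sum>k<3. (v k)\<^sup>2) \<le> (\<Sum>l<3. (\<Sum>k<3. (if P l k then N l k else 0) * v k)\<^sup>2)"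
   and o2: "\<And>k k'. k<3 \<Longrightarrow> k'<3 \<Longrightarrow> (\<Sum>l<3. Nt l k * Nt l k') = (if k=k' then 1 else 0)"
   and p2: "0 < (\<Sum>k<3. (u k)\<^sup>2)"
   and v2: "\<eta>\<^sup>2 * (\<Sum>k<3. (u k)\<^sup>2) \<le> (\<Sum>l<3. (\<Sum>k<3. (if P k l then Nt l k else 0) * u k)\<^sup>2)"
   and eta: "0 \<le> \<eta>"
  shows "ereal \<eta> \<le> schur_norm TYPE('f::{real_normed_field,real_inner}) R C E"
proof -
  from hic obtain R0 C0 where R0: "R0 \<subseteq> R" "C0 \<subseteq> C" and
    cases: "(\<exists>f g. bij_betw f R0 {..<3} \<and> bij_betw g C0 {..<3} \<and>
              (\<forall>r\<in>R0. \<forall>c\<in>C0. (r, c) \<in> E \<longleftrightarrow> P (f r) (g c))) \<or>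
        (\<exists>f g. bij_betw f R0 {..<3} \<and> bij_betw g C0 {..<3} \<and>
              (\<forall>r\<in>R0. \<forall>c\<in>C0. (r, c) \<in> E \<longleftrightarrow> P (g c) (f r)))"
    unfolding has_induced_copy_def by blast
  from cases show ?thesis
  proof
    assume "\<exists>f g. bij_betw f R0 {..<3} \<and> bij_betw g C0 {..<3} \<and>
              (\<forall>r\<in>R0. \<forall>c\<in>C0. (r, c) \<in> E \<longleftrightarrow> P (f r) (g c))"
    then obtain f g where fg: "bij_betw f R0 {..<3}" "bij_betw g C0 {..<3}"
      "\<forall>r\<in>R0. \<forall>c\<in>C0. (r, c) \<in> E \<longleftrightarrow> P (f r) (g c)" by blast
    show ?thesis by (rule copy_lb[OF R0 fg o1 p1 v1 eta])
  next
    assume "\<exists>f g. bij_betw f R0 {..<3} \<and> bij_betw g C0 {..<3} \<and>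
              (\<forall>r\<in>R0. \<forall>c\<in>C0. (r, c) \<in> E \<longleftrightarrow> P (g c) (f r))"
    then obtain f g where fg: "bij_betw f R0 {..<3}" "bij_betw g C0 {..<3}"
      "\<forall>r\<in>R0. \<forall>c\<in>C0. (r, c) \<in> E \<longleftrightarrow> (\<lambda>l k. P k l) (f r) (g c)" by auto
    have v2': "\<eta>\<^sup>2 * (\<Sum>k<3. (u k)\<^sup>2) \<le> (\<Sum>l<3. (\<Sum>k<3. (if (\<lambda>l k. P k l) l k then Nt l k else 0) * u k)\<^sup>2)"
      using v2 by simp
    show ?thesis by (rule copy_lb[OF R0 fg o2 p2 v2' eta])
  qed
qed

lemma eta4_sq: "eta4\<^sup>2 = (169 + 38 * sqrt 19) / 225"
  unfolding eta4_def by (simp add: power_divide)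

lemma eta4_nonneg: "0 \<le> eta4" unfolding eta4_def by simp

lemma eta4_le: "eta4\<^sup>2 \<le> 3/2"
proof -
  have "sqrt 19 \<le> sqrt ((22/5)\<^sup>2)" by (rule real_sqrt_le_mono) (simp add: power2_eq_square)
  then have "sqrt 19 \<le> 22/5" by simp
  then show ?thesis unfolding eta4_sq by simp
qed

lemma val_from: "(\<eta>::real)\<^sup>2 \<le> q \<Longrightarrow> q * S \<le> T \<Longrightarrow> 0 \<le> S \<Longrightarrow> \<eta>\<^sup>2 * S \<le> T"
  by (meson mult_right_mono order_trans)

lemma H2_lb: "has_induced_copy R C E H2 \<Longrightarrow> ereal eta4 \<le> schur_norm TYPE('f::{real_normed_field,real_inner}) R C E"
  apply (rule hic_lb[where N="mat3 (21/29) (12/29) (16/29) (12/29) (11/29) (-24/29) (-16/29) (24/29) (3/29)"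
     and v="vec3 11 14 (-9)"
     and Nt="mat3 (21/29) (12/29) (-16/29) (12/29) (11/29) (24/29) (16/29) (-24/29) (3/29)"
     and u="vec3 11 14 9"])
  apply assumption
  apply (rule orth9; simp)
  apply (simp add: sum3)
  apply (rule val_from[OF eta4_le]; simp add: sum3 H2_def power2_eq_square)
  apply (rule orth9; simp)
  apply (simp add: sum3)
  apply (rule val_from[OF eta4_le]; simp add: sum3 H2_def power2_eq_square)
  apply (rule eta4_nonneg)
  done

lemma H3_lb: "has_induced_copy R C E H3 \<Longrightarrow> ereal eta4 \<le> schur_norm TYPE('f::{real_normed_field,real_inner}) R C E"
  apply (rule hic_lb[where N="mat3 (8/17) (-12/17) (9/17) (12/17) (-1/17) (-12/17) (9/17) (12/17) (8/17)"
     and v="vec3 (-11) 13 11"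
     and Nt="mat3 (8/17) (12/17) (9/17) (-12/17) (-1/17) (12/17) (9/17) (-12/17) (8/17)"
     and u="vec3 11 13 (-11)"])
  apply assumption
  apply (rule orth9; simp)
  apply (simp add: sum3)
  apply (rule val_from[OF eta4_le]; simp add: sum3 H3_def power2_eq_square)
  apply (rule orth9; simp)
  apply (simp add: sum3)
  apply (rule val_from[OF eta4_le]; simp add: sum3 H3_def power2_eq_square)
  apply (rule eta4_nonneg)
  done


lemma H1_gen_orth:
  fixes a b c d :: real
  assumes "a + c = 1" "d = a - c" "b*b = 2*a*c"
  shows "\<And>k k'. k<3 \<Longrightarrow> k'<3 \<Longrightarrow> (\<Sum>l<3. mat3 (-a) b (-c) b d (-b) (-c) (-b) (-a) l k * mat3 (-a) b (-c) b d (-b) (-c) (-b) (-a) l k') = (if k=k' then 1 else 0)"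
proof (rule orth9)
  show "- a * - a + b * b + - c * - c = 1" using assms by algebra
  show "b * b + d * d + - b * - b = 1" using assms by algebra
  show "- c * - c + - b * - b + - a * - a = 1" using assms by algebra
  show "- a * b + b * d + - c * - b = 0" using assms by algebra
  show "- a * - c + b * - b + - c * - a = 0" using assms by algebra
  show "b * - c + d * - b + - b * - a = 0" using assms by algebra
qed

lemma H1_gen_val1:
  fixes a b c d \<mu> :: real
  shows "(\<Sum>l<3. (\<Sum>k<3. (if H1 l k then mat3 (-a) b (-c) b d (-b) (-c) (-b) (-a) l k else 0) * vec3 (b*d) \<mu> (-(b*d)) k)\<^sup>2)
     = 2*a^2*(b*b)*d^2 + d^2*(2*(b*b)+\<mu>)^2"
  by (simp add: sum3 H1_def power2_eq_square algebra_simps)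

lemma H1_gen_S1:
  fixes b d \<mu> :: real
  shows "(\<Sum>k<3. (vec3 (b*d) \<mu> (-(b*d)) k)\<^sup>2) = 2*(b*b)*d^2 + \<mu>^2"
  by (simp add: sum3 power2_eq_square algebra_simps)

lemma H1_gen_val2:
  fixes a b c d e :: real
  shows "(\<Sum>l<3. (\<Sum>k<3. (if H1 k l then mat3 (-a) b (-c) b d (-b) (-c) (-b) (-a) l k else 0) * vec3 (-(a*b*d)) e (a*b*d) k)\<^sup>2)
     = 2*(b*b)*(a^2*d+e)^2 + d^2*e^2"
  by (simp add: sum3 H1_def power2_eq_square algebra_simps)

lemma H1_gen_S2:
  fixes a b d e :: real
  shows "(\<Sum>k<3. (vec3 (-(a*b*d)) e (a*b*d) k)\<^sup>2) = 2*a^2*(b*b)*d^2 + e^2"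
  by (simp add: sum3 power2_eq_square algebra_simps)

lemma H1_poly1: fixes t :: real shows "(169+38*t)*(2*(74-2*t)*(1+2*t)^2 + (-62+26*t)^2) - (2*(8+t)^2*(74-2*t)*(1+2*t)^2 + (1+2*t)^2*(2*(74-2*t)+(-62+26*t))^2) = (t*t-19)*(-34620 + 19324*t - 2864*t^2 + 16*t^3)"
  by algebra

lemma H1_poly2: fixes t :: real shows "(169+38*t)*(2*(8+t)^2*(74-2*t)*(1+2*t)^2 + (1+2*t)^2*(2*(74-2*t)+(-62+26*t))^2) - (2*(74-2*t)*(1+2*t)^2*((8+t)^2+2*(74-2*t)+(-62+26*t))^2 + (1+2*t)^4*(2*(74-2*t)+(-62+26*t))^2) = (t*t-19)*(25616 + 102104*t + 99092*t^2 - 9164*t^3 - 7712*t^4 + 16*t^5)"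
  by algebra

lemma H1_lb: "has_induced_copy R C E H1 \<Longrightarrow> ereal eta4 \<le> schur_norm TYPE('f::{real_normed_field,real_inner}) R C E"
proof -
  assume hic: "has_induced_copy R C E H1"
  define t :: real where "t = sqrt 19"
  have tt: "t*t = 19" unfolding t_def by simp
  have tpos: "0 < t" unfolding t_def by simp
  have tle: "t \<le> 22/5"
  proof -
    have "sqrt 19 \<le> sqrt ((22/5)\<^sup>2)" by (rule real_sqrt_le_mono) (simp add: power2_eq_square)
    then show ?thesis unfolding t_def by simp
  qed
  define a where "a = (8+t)/15"
  define c where "c = (7-t)/15"
  define d where "d = (1+2*t)/15"
  define B where "B = (74-2*t)/225"
  define \<mu> where "\<mu> = (-62+26*t)/225"
  define b where "b = sqrt B"
  have Bpos: "0 < B" unfolding B_def using tle by simp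
  have bb: "b*b = B" unfolding b_def using Bpos by simp
  have dpos: "0 < d" unfolding d_def using tpos by simp
  have apos: "0 < a" unfolding a_def using tpos by simp
  have eta2: "eta4\<^sup>2 = (169+38*t)/225" unfolding eta4_sq t_def by simp
  have ac1: "a + c = 1" unfolding a_def c_def by (simp add: field_simps)
  have dac: "d = a - c" unfolding a_def c_def d_def by (simp add: field_simps)
  have b2ac: "b*b = 2*a*c"
  proof -
    have "2*a*c = (2*(56 - t - t*t))/225" unfolding a_def c_def by (simp add: field_simps)
    then show ?thesis unfolding bb B_def using tt by simp
  qed
  note orth = H1_gen_orth[OF ac1 dac b2ac]
  have S1: "0 < (\<Sum>k<3. (vec3 (b*d) \<mu> (-(b*d)) k)\<^sup>2)"
    unfolding H1_gen_S1 bb using Bpos dpos by (simp add: add_pos_nonneg)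
  have V1: "eta4\<^sup>2 * (\<Sum>k<3. (vec3 (b*d) \<mu> (-(b*d)) k)\<^sup>2) \<le>
     (\<Sum>l<3. (\<Sum>k<3. (if H1 l k then mat3 (-a) b (-c) b d (-b) (-c) (-b) (-a) l k else 0) * vec3 (b*d) \<mu> (-(b*d)) k)\<^sup>2)"
  proof -
    have L: "eta4\<^sup>2 * (\<Sum>k<3. (vec3 (b*d) \<mu> (-(b*d)) k)\<^sup>2) = ((169+38*t)*(2*(74-2*t)*(1+2*t)^2 + (-62+26*t)^2))/225^3"
      unfolding H1_gen_S1 bb eta2 B_def d_def \<mu>_def by (simp add: field_simps power2_eq_square)
    have R: "(\<Sum>l<3. (\<Sum>k<3. (if H1 l k then mat3 (-a) b (-c) b d (-b) (-c) (-b) (-a) l k else 0) * vec3 (b*d) \<mu> (-(b*d)) k)\<^sup>2)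
       = (2*(8+t)^2*(74-2*t)*(1+2*t)^2 + (1+2*t)^2*(2*(74-2*t)+(-62+26*t))^2)/225^3"
      unfolding H1_gen_val1 bb a_def B_def d_def \<mu>_def by (simp add: field_simps power2_eq_square)
    have "(169+38*t)*(2*(74-2*t)*(1+2*t)^2 + (-62+26*t)^2) = 2*(8+t)^2*(74-2*t)*(1+2*t)^2 + (1+2*t)^2*(2*(74-2*t)+(-62+26*t))^2"
      using H1_poly1[of t] tt by simp
    then show ?thesis unfolding L R by simp
  qed
  define e where "e = d*(2*(b*b)+\<mu>)"
  have S2: "0 < (\<Sum>k<3. (vec3 (-(a*b*d)) e (a*b*d) k)\<^sup>2)"
    unfolding H1_gen_S2 bb using Bpos dpos apos by (simp add: add_pos_nonneg)
  have V2: "eta4\<^sup>2 * (\<Sum>k<3. (vec3 (-(a*b*d)) e (a*b*d) k)\<^sup>2) \<le>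
     (\<Sum>l<3. (\<Sum>k<3. (if H1 k l then mat3 (-a) b (-c) b d (-b) (-c) (-b) (-a) l k else 0) * vec3 (-(a*b*d)) e (a*b*d) k)\<^sup>2)"
  proof -
    have L: "eta4\<^sup>2 * (\<Sum>k<3. (vec3 (-(a*b*d)) e (a*b*d) k)\<^sup>2) = ((169+38*t)*(2*(8+t)^2*(74-2*t)*(1+2*t)^2 + (1+2*t)^2*(2*(74-2*t)+(-62+26*t))^2))/225^4"
      unfolding H1_gen_S2 e_def bb eta2 a_def B_def d_def \<mu>_def by (simp add: field_simps power2_eq_square)
    have R: "(\<Sum>l<3. (\<Sum>k<3. (if H1 k l then mat3 (-a) b (-c) b d (-b) (-c) (-b) (-a) l k else 0) * vec3 (-(a*b*d)) e (a*b*d) k)\<^sup>2)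
       = (2*(74-2*t)*(1+2*t)^2*((8+t)^2+2*(74-2*t)+(-62+26*t))^2 + (1+2*t)^4*(2*(74-2*t)+(-62+26*t))^2)/225^4"
      unfolding H1_gen_val2 e_def bb a_def B_def d_def \<mu>_def by (simp add: field_simps power2_eq_square power4_eq_xxxx)
    have "(169+38*t)*(2*(8+t)^2*(74-2*t)*(1+2*t)^2 + (1+2*t)^2*(2*(74-2*t)+(-62+26*t))^2) = 2*(74-2*t)*(1+2*t)^2*((8+t)^2+2*(74-2*t)+(-62+26*t))^2 + (1+2*t)^4*(2*(74-2*t)+(-62+26*t))^2"
      using H1_poly2[of t] tt by simp
    then show ?thesis unfolding L R by simp
  qed
  show ?thesis
    by (rule hic_lb[OF hic orth S1 V1 orth S2 V2 eta4_nonneg])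
qed


lemma entry_bound:
  assumes "mat_opnorm R C X \<le> 1" "i \<in> R" "j \<in> C"
  shows "norm (X i j) \<le> 1"
proof -
  have "ereal (sqrt (\<Sum>i'\<in>{i}. (norm (\<Sum>j'\<in>{j}. X i' j' * (\<lambda>_. 1) j'))\<^sup>2)) \<le> mat_opnorm R C X"
    unfolding mat_opnorm_def
    by (rule SUP_upper2[of "({i}, {j}, \<lambda>_. 1)"]) (use assms in auto)
  then have "ereal (norm (X i j)) \<le> mat_opnorm R C X" by simp
  then have "ereal (norm (X i j)) \<le> 1" using assms(1) by (rule order_trans)
  then show ?thesis by simp
qed

lemma sum_unique:
  assumes "finite A" "a \<in> A" "\<And>x. x \<in> A \<Longrightarrow> x \<noteq> a \<Longrightarrow> g x = 0"
  shows "sum g A = g a"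
proof -
  have "sum g A = g a + sum g (A - {a})" using assms by (simp add: sum.remove)
  also have "sum g (A - {a}) = 0" using assms by (intro sum.neutral) auto
  finally show ?thesis by simp
qed

lemma deg1_le:
  assumes ER: "E \<subseteq> R \<times> C"
    and rows: "\<And>i j j'. (i,j)\<in>E \<Longrightarrow> (i,j')\<in>E \<Longrightarrow> j = j'"
    and cols: "\<And>i i' j. (i,j)\<in>E \<Longrightarrow> (i',j)\<in>E \<Longrightarrow> i = i'"
  shows "schur_norm TYPE('f::real_normed_field) R C E \<le> 1"
  unfolding schur_norm_def
proof (rule SUP_least)
  fix X :: "'a \<Rightarrow> 'b \<Rightarrow> 'f" assume "X \<in> {X. mat_opnorm R C X \<le> 1}"
  then have opX: "mat_opnorm R C X \<le> 1" by simp
  define Z where "Z i j = (if (i, j) \<in> E then X i j else 0)" for i j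
  show "mat_opnorm R C (\<lambda>i j. if (i, j) \<in> E then X i j else 0) \<le> 1"
    unfolding mat_opnorm_def Z_def[symmetric]
  proof (rule SUP_least, clarify)
    fix R1 C1 and y :: "'b \<Rightarrow> 'f"
    assume fR1: "finite R1" and "R1 \<subseteq> R" and fC1: "finite C1" and "C1 \<subseteq> C" and y1: "(\<Sum>j\<in>C1. (norm (y j))\<^sup>2) \<le> 1"
    have row: "(norm (\<Sum>j\<in>C1. Z i j * y j))\<^sup>2 \<le> (\<Sum>j\<in>C1. if (i,j)\<in>E then (norm (y j))\<^sup>2 else 0)" for i
    proof (cases "\<exists>j0\<in>C1. (i,j0)\<in>E")
      case True
      then obtain j0 where j0: "j0 \<in> C1" "(i,j0) \<in> E" by blast
      have "(\<Sum>j\<in>C1. Z i j * y j) = Z i j0 * y j0"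
        by (rule sum_unique[OF fC1 j0(1)]) (use rows j0 in \<open>auto simp: Z_def\<close>)
      moreover have "(\<Sum>j\<in>C1. if (i,j)\<in>E then (norm (y j))\<^sup>2 else 0) = (norm (y j0))\<^sup>2"
        by (subst sum_unique[OF fC1 j0(1)]) (use rows j0 in auto)
      moreover have "norm (X i j0) \<le> 1" using entry_bound[OF opX] j0 ER by blast
      ultimately show ?thesis using j0
        by (simp add: Z_def norm_mult power_mult_distrib mult_left_le_one_le power_le_one)
    next
      case False
      then have "(\<Sum>j\<in>C1. Z i j * y j) = 0" by (intro sum.neutral) (auto simp: Z_def)
      then show ?thesis by (simp add: sum_nonneg)
    qed
    have col: "(\<Sum>i\<in>R1. if (i,j)\<in>E then (norm (y j))\<^sup>2 else 0) \<le> (norm (y j))\<^sup>2" for j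
    proof (cases "\<exists>i0\<in>R1. (i0,j)\<in>E")
      case True
      then obtain i0 where i0: "i0 \<in> R1" "(i0,j) \<in> E" by blast
      have "(\<Sum>i\<in>R1. if (i,j)\<in>E then (norm (y j))\<^sup>2 else 0) = (norm (y j))\<^sup>2"
        by (subst sum_unique[OF fR1 i0(1)]) (use cols i0 in auto)
      then show ?thesis by simp
    next
      case False
      then show ?thesis by (simp add: sum.neutral)
    qed
    have "(\<Sum>i\<in>R1. (norm (\<Sum>j\<in>C1. Z i j * y j))\<^sup>2) \<le> (\<Sum>i\<in>R1. \<Sum>j\<in>C1. if (i,j)\<in>E then (norm (y j))\<^sup>2 else 0)"
      by (intro sum_mono row)
    also have "\<dots> = (\<Sum>j\<in>C1. \<Sum>i\<in>R1. if (i,j)\<in>E then (norm (y j))\<^sup>2 else 0)"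
      by (rule sum.swap)
    also have "\<dots> \<le> (\<Sum>j\<in>C1. (norm (y j))\<^sup>2)"
      by (intro sum_mono col)
    also have "\<dots> \<le> 1" by (rule y1)
    finally show "ereal (sqrt (\<Sum>i\<in>R1. (norm (\<Sum>j\<in>C1. Z i j * y j))\<^sup>2)) \<le> 1" by simp
  qed
qed


lemma three:
  assumes "3 \<le> ecard S"
  obtains x y z where "x \<in> S" "y \<in> S" "z \<in> S" "x \<noteq> y" "y \<noteq> z" "x \<noteq> z"
proof -
  have "\<exists>T\<subseteq>S. finite T \<and> card T = 3"
  proof (cases "finite S")
    case True
    then have "3 \<le> card S" using assms by (simp add: ecard_def)
    then show ?thesis using obtain_subset_with_card_n by (metis True finite_subset)
  next
    case False
    then show ?thesis using infinite_arbitrarily_large by blast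
  qed
  then obtain T where "T \<subseteq> S" "card T = 3" by blast
  then show ?thesis using that unfolding card_3_iff by blast
qed

lemma transp_copy:
  assumes "has_induced_copy C R (converse E) P"
  shows "has_induced_copy R C E P"
proof -
  from assms obtain R0 C0 where R0: "R0 \<subseteq> C" "C0 \<subseteq> R" and
    cases: "(\<exists>f g. bij_betw f R0 {..<3} \<and> bij_betw g C0 {..<3} \<and>
              (\<forall>r\<in>R0. \<forall>c\<in>C0. (r, c) \<in> converse E \<longleftrightarrow> P (f r) (g c))) \<or>
        (\<exists>f g. bij_betw f R0 {..<3} \<and> bij_betw g C0 {..<3} \<and>
              (\<forall>r\<in>R0. \<forall>c\<in>C0. (r, c) \<in> converse E \<longleftrightarrow> P (g c) (f r)))"
    unfolding has_induced_copy_def by blast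
  from cases show ?thesis
  proof
    assume "\<exists>f g. bij_betw f R0 {..<3} \<and> bij_betw g C0 {..<3} \<and>
              (\<forall>r\<in>R0. \<forall>c\<in>C0. (r, c) \<in> converse E \<longleftrightarrow> P (f r) (g c))"
    then obtain f g where fg: "bij_betw f R0 {..<3}" "bij_betw g C0 {..<3}"
      "\<forall>r\<in>R0. \<forall>c\<in>C0. (r, c) \<in> converse E \<longleftrightarrow> P (f r) (g c)" by blast
    have "\<forall>r\<in>C0. \<forall>c\<in>R0. (r, c) \<in> E \<longleftrightarrow> P (f c) (g r)" using fg(3) by auto
    then show ?thesis unfolding has_induced_copy_def using R0 fg(1,2) by blast
  next
    assume "\<exists>f g. bij_betw f R0 {..<3} \<and> bij_betw g C0 {..<3} \<and>
              (\<forall>r\<in>R0. \<forall>c\<in>C0. (r, c) \<in> converse E \<longleftrightarrow> P (g c) (f r))"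
    then obtain f g where fg: "bij_betw f R0 {..<3}" "bij_betw g C0 {..<3}"
      "\<forall>r\<in>R0. \<forall>c\<in>C0. (r, c) \<in> converse E \<longleftrightarrow> P (g c) (f r)" by blast
    have "\<forall>r\<in>C0. \<forall>c\<in>R0. (r, c) \<in> E \<longleftrightarrow> P (g r) (f c)" using fg(3) by auto
    then show ?thesis unfolding has_induced_copy_def using R0 fg(1,2) by blast
  qed
qed

lemma part1:
  assumes "bip_graph R C E" "twin_free R C E" "\<exists>d\<in>degrees R C E. d \<ge> 3"
  shows "goal1 R C E"
proof -
  have ER: "E \<subseteq> R \<times> C" using assms(1) by (simp add: bip_graph_def)
  have tc: "\<forall>c1\<in>C. \<forall>c2\<in>C. c1 \<noteq> c2 \<longrightarrow> col_nbhd E c1 \<noteq> col_nbhd E c2"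
    using assms(2) by (simp add: twin_free_def)
  have tr: "\<forall>c1\<in>R. \<forall>c2\<in>R. c1 \<noteq> c2 \<longrightarrow> col_nbhd (converse E) c1 \<noteq> col_nbhd (converse E) c2"
    using assms(2) by (simp add: twin_free_def row_nbhd_def col_nbhd_def)
  from assms(3) obtain d where d: "d \<in> degrees R C E" "d \<ge> 3" by blast
  then consider (r) r where "r \<in> R" "3 \<le> ecard (row_nbhd E r)" | (c) c where "c \<in> C" "3 \<le> ecard (col_nbhd E c)"
    unfolding degrees_def by blast
  then show ?thesis
  proof cases
    case r
    then obtain x y z where xyz: "x \<in> row_nbhd E r" "y \<in> row_nbhd E r" "z \<in> row_nbhd E r" "x \<noteq> y" "y \<noteq> z" "x \<noteq> z"
      using three by blast
    have e: "(r,x) \<in> E" "(r,y) \<in> E" "(r,z) \<in> E" using xyz(1-3) by (simp_all add: row_nbhd_def)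
    show ?thesis by (rule row_case[OF ER tc xyz(4-6) e])
  next
    case c
    then obtain x y z where xyz: "x \<in> col_nbhd E c" "y \<in> col_nbhd E c" "z \<in> col_nbhd E c" "x \<noteq> y" "y \<noteq> z" "x \<noteq> z"
      using three by blast
    have ER': "converse E \<subseteq> C \<times> R" using ER by auto
    have e: "(c,x) \<in> converse E" "(c,y) \<in> converse E" "(c,z) \<in> converse E" using xyz(1-3) by (simp_all add: col_nbhd_def)
    have "goal1 C R (converse E)" by (rule row_case[OF ER' tr xyz(4-6) e])
    then show ?thesis unfolding goal1_def
      using transp_copy[of C R E H1] transp_copy[of C R E H2] transp_copy[of C R E H3] by blast
  qed
qed


lemma goal1_lb:
  assumes "goal1 R C E"
  shows "ereal eta4 \<le> schur_norm TYPE('f::{real_normed_field,real_inner}) R C E"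
proof -
  from assms consider "has_induced_copy R C E H1" | "has_induced_copy R C E H2" | "has_induced_copy R C E H3"
    unfolding goal1_def by blast
  then show ?thesis
  proof cases
    case 1 then show ?thesis by (rule H1_lb)
  next
    case 2 then show ?thesis by (rule H2_lb)
  next
    case 3 then show ?thesis by (rule H3_lb)
  qed
qed

lemma ecard_le1:
  assumes "ecard S \<le> 1"
  shows "finite S" "\<And>x y. x \<in> S \<Longrightarrow> y \<in> S \<Longrightarrow> x = y"
proof -
  show fS: "finite S" using assms by (auto simp: ecard_def split: if_splits)
  then have "card S \<le> 1" using assms by (simp add: ecard_def one_enat_def)
  then show "\<And>x y. x \<in> S \<Longrightarrow> y \<in> S \<Longrightarrow> x = y" using card_le_Suc0_iff_eq[OF fS] by auto
qed

lemma part2: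
  assumes bg: "bip_graph R C E" and tf: "twin_free R C E"
    and lo: "1 < schur_norm TYPE('f::{real_normed_field,real_inner}) R C E"
    and hi: "schur_norm TYPE('f) R C E < ereal eta4"
  shows "max_deg R C E = 2"
proof -
  have ER: "E \<subseteq> R \<times> C" using bg by (simp add: bip_graph_def)
  have no3: "\<not> (\<exists>d\<in>degrees R C E. d \<ge> 3)"
  proof
    assume "\<exists>d\<in>degrees R C E. d \<ge> 3"
    then have "ereal eta4 \<le> schur_norm TYPE('f) R C E" using goal1_lb part1[OF bg tf] by blast
    then show False using hi by simp
  qed
  have le2: "\<forall>d\<in>degrees R C E. d \<le> 2"
  proof
    fix d assume "d \<in> degrees R C E"
    then have "\<not> 3 \<le> d" using no3 by blast
    then show "d \<le> 2" by (cases d) (auto simp: numeral_eq_enat)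
  qed
  show ?thesis
  proof (cases "2 \<in> degrees R C E")
    case True
    have "Sup (degrees R C E) \<le> 2" by (rule Sup_least) (use le2 in blast)
    moreover have "2 \<le> Sup (degrees R C E)" by (rule Sup_upper[OF True])
    ultimately show ?thesis unfolding max_deg_def by (rule antisym)
  next
    case False
    have le1: "\<forall>d\<in>degrees R C E. d \<le> 1"
    proof
      fix d assume "d \<in> degrees R C E"
      then have "d \<le> 2" "d \<noteq> 2" using le2 False by auto
      then show "d \<le> 1"
        by (cases d) (auto simp: one_enat_def numeral_eq_enat)
    qed
    have rows: "(i,j)\<in>E \<Longrightarrow> (i,j')\<in>E \<Longrightarrow> j = j'" for i j j'
    proof -
      assume a: "(i,j)\<in>E" "(i,j')\<in>E"
      then have "i \<in> R" using ER by auto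
      then have "ecard (row_nbhd E i) \<le> 1" using le1 unfolding degrees_def by blast
      then show "j = j'" using ecard_le1(2) a by (force simp: row_nbhd_def)
    qed
    have cols: "(i,j)\<in>E \<Longrightarrow> (i',j)\<in>E \<Longrightarrow> i = i'" for i i' j
    proof -
      assume a: "(i,j)\<in>E" "(i',j)\<in>E"
      then have "j \<in> C" using ER by auto
      then have "ecard (col_nbhd E j) \<le> 1" using le1 unfolding degrees_def by blast
      then show "i = i'" using ecard_le1(2) a by (force simp: col_nbhd_def)
    qed
    have "schur_norm TYPE('f) R C E \<le> 1" by (rule deg1_le[OF ER rows cols])
    then show ?thesis using lo by simp
  qed
qed

theorem lemma6p3:
  fixes R :: "'a set" and C :: "'b set" and E :: "('a \<times> 'b) set"
  assumes "bip_graph R C E" and "twin_free R C E"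
  shows "((\<exists>d\<in>degrees R C E. d \<ge> 3) \<longrightarrow>
            has_induced_copy R C E H1 \<or> has_induced_copy R C E H2 \<or> has_induced_copy R C E H3)
       \<and> (1 < schur_norm TYPE(real) R C E \<and> schur_norm TYPE(real) R C E < ereal eta4
            \<longrightarrow> max_deg R C E = 2)
       \<and> (1 < schur_norm TYPE(complex) R C E \<and> schur_norm TYPE(complex) R C E < ereal eta4
            \<longrightarrow> max_deg R C E = 2)"
proof (intro conjI impI)
  assume "\<exists>d\<in>degrees R C E. d \<ge> 3"
  then show "has_induced_copy R C E H1 \<or> has_induced_copy R C E H2 \<or> has_induced_copy R C E H3"
    using part1[OF assms] unfolding goal1_def by blast
next
  assume "1 < schur_norm TYPE(real) R C E \<and> schur_norm TYPE(real) R C E < ereal eta4"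
  then show "max_deg R C E = 2" by (elim conjE) (rule part2[OF assms])
next
  assume "1 < schur_norm TYPE(complex) R C E \<and> schur_norm TYPE(complex) R C E < ereal eta4"
  then show "max_deg R C E = 2" by (elim conjE) (rule part2[OF assms])
qed


end
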